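(* Let $K$ be a compact subset of $\mathbb R^d$, let $A\subset K$ be a Borel set, let $\mu\in\mathcal P(K)$ and $r>0$. Then $$\int_A\log\mu(B(x,2r))\,d\mu(x)\ge-\mu(A(r))\log\mathbf N_r(A)-e^{-1}.$$
   Context: $\mathcal P(K)$ is the set of Borel probability measures on $K$, $B(x,r)$ the open ball, $A(r)=\{x\in K:\operatorname{dist}(x,A)<r\}$, and $\mathbf N_r(A)$ the smallest number of balls of radius $r$ needed to cover $A$. *)

theory Defs
  imports "HOL-Probability.Probability"
begin

definition nbhd_in :: "'a::metric_space set \<Rightarrow> 'a set \<Rightarrow> real \<Rightarrow> 'a set" where
  "nbhd_in K A r = {x \<in> K. \<exists>a\<in>A. dist x a < r}"

text \<open>N_r(A): the smallest number of open balls of radius r (balls of the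
  metric space K, i.e. centred at points of K) needed to cover A.\<close>
definition covering_number :: "'a::metric_space set \<Rightarrow> 'a set \<Rightarrow> real \<Rightarrow> nat" where
  "covering_number K A r =
     (LEAST n. \<exists>C. C \<subseteq> K \<and> finite C \<and> card C = n \<and> A \<subseteq> (\<Union>c\<in>C. ball c r))"

end

theory Submission
  imports Defs
begin

lemma xlnx_ge: fixes x :: real assumes "x \<ge> 0" shows "x * ln x \<ge> - exp (-1)"
proof (cases "x = 0")
  case True then show ?thesis by simp
next
  case False
  then have xp: "x > 0" using assms by simp
  have "ln (1 / (exp 1 * x)) \<le> 1 / (exp 1 * x) - 1"
    by (rule ln_le_minus_one) (use xp in simp)
  moreover have "ln (1 / (exp 1 * x)) = -1 - ln x"
    using xp by (simp add: ln_div ln_mult)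
  ultimately have "- ln x \<le> 1 / (exp 1 * x)" by simp
  then have "x * (- ln x) \<le> x * (1 / (exp 1 * x))" using xp by (intro mult_left_mono) simp_all
  also have "\<dots> = exp (-1)" using xp by (simp add: exp_minus field_simps)
  finally show ?thesis by simp
qed

lemma tangent_ln: fixes p m :: real assumes "p \<ge> 0" "m > 0"
  shows "p * ln p \<ge> p * ln m + p - m"
proof (cases "p = 0")
  case True then show ?thesis using assms by simp
next
  case False
  then have pp: "p > 0" using assms by simp
  have "ln (m / p) \<le> m / p - 1" by (rule ln_le_minus_one) (use pp assms in simp)
  then have "p * ln (m / p) \<le> p * (m / p - 1)" using pp by (intro mult_left_mono) simp_all
  moreover have "ln (m/p) = ln m - ln p" using pp assms by (simp add: ln_div)
  moreover have "p * (m / p - 1) = m - p" using pp by (simp add: field_simps)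
  ultimately have "p * (ln m - ln p) \<le> m - p" by simp
  then show ?thesis by (simp add: algebra_simps)
qed

lemma entropy_bound: fixes p :: "'i \<Rightarrow> real"
  assumes "finite I" "\<And>i. i \<in> I \<Longrightarrow> p i \<ge> 0"
  shows "(\<Sum>i\<in>I. p i * ln (p i)) \<ge> - (\<Sum>i\<in>I. p i) * ln (real (card I)) - exp (-1)"
proof -
  define a where "a = (\<Sum>i\<in>I. p i)"
  have a0: "a \<ge> 0" unfolding a_def using assms by (simp add: sum_nonneg)
  show ?thesis
  proof (cases "a = 0")
    case True
    then have "\<forall>i\<in>I. p i = 0" using assms unfolding a_def by (simp add: sum_nonneg_eq_0_iff)
    then show ?thesis using True by (simp add: a_def)
  next
    case False
    then have ap: "a > 0" using a0 by simp
    then have "I \<noteq> {}" unfolding a_def by auto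
    then have Np: "card I > 0" using assms(1) by (simp add: card_gt_0_iff)
    define m where "m = a / card I"
    have mp: "m > 0" using ap Np by (simp add: m_def)
    have "(\<Sum>i\<in>I. p i * ln (p i)) \<ge> (\<Sum>i\<in>I. p i * ln m + p i - m)"
      by (rule sum_mono) (use tangent_ln assms(2) mp in auto)
    also have "(\<Sum>i\<in>I. p i * ln m + p i - m) = a * ln m + a - card I * m"
      by (simp add: sum.distrib sum_subtractf sum_distrib_right a_def)
    also have "\<dots> = a * ln m" using Np by (simp add: m_def)
    also have "a * ln m = a * ln a - a * ln (card I)" using ap Np
      by (simp add: m_def ln_div right_diff_distrib)
    finally have "(\<Sum>i\<in>I. p i * ln (p i)) \<ge> a * ln a - a * ln (card I)" .
    moreover have "a * ln a \<ge> - exp (-1)" using xlnx_ge a0 by blast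
    ultimately show ?thesis unfolding a_def by linarith
  qed
qed

lemma meas_ball:
  fixes K :: "'a::euclidean_space set" and M :: "'a measure"
  assumes K: "K \<in> sets borel" and sM: "sets M = sets (restrict_space borel K)"
    and fin: "finite_measure M"
  shows "(\<lambda>x. measure M (ball x \<rho> \<inter> K)) \<in> borel_measurable M"
proof -
  have spM: "space M = K" using sets_eq_imp_space_eq[OF sM] by (simp add: space_restrict_space)
  have idm: "(\<lambda>x. x) \<in> measurable M borel"
  proof -
    have "(\<lambda>x. x) \<in> measurable (restrict_space borel K) (borel::'a measure)"
      by (rule measurable_restrict_space1) simp
    moreover have "measurable M (borel::'a measure) = measurable (restrict_space borel K) borel"
      by (rule measurable_cong_sets[OF sM refl])
    ultimately show ?thesis by simp
  qed
  interpret sigma_finite_measure M using fin by (simp add: finite_measure.sigma_finite_measure)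
  define Q where "Q = {z \<in> space (M \<Otimes>\<^sub>M M). dist (fst z) (snd z) < \<rho>}"
  have "Q \<in> sets (M \<Otimes>\<^sub>M M)" unfolding Q_def
    using idm by measurable
  then have "(\<lambda>x. emeasure M (Pair x -` Q)) \<in> borel_measurable M"
    by (rule measurable_emeasure_Pair)
  then have "(\<lambda>x. enn2real (emeasure M (Pair x -` Q))) \<in> borel_measurable M" by measurable
  moreover have "\<And>x. x \<in> space M \<Longrightarrow> enn2real (emeasure M (Pair x -` Q)) = measure M (ball x \<rho> \<inter> K)"
  proof -
    fix x assume "x \<in> space M"
    then have "Pair x -` Q = ball x \<rho> \<inter> K" unfolding Q_def using spM by (auto simp: space_pair_measure)
    then show "enn2real (emeasure M (Pair x -` Q)) = measure M (ball x \<rho> \<inter> K)" by (simp add: measure_def)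
  qed
  ultimately show ?thesis by (metis (no_types, lifting) measurable_cong)
qed

theorem lemma6p1:
  fixes K A :: "'a::euclidean_space set" and M :: "'a measure" and r :: real
  assumes "compact K"
    and "A \<in> sets borel" and "A \<subseteq> K"
    and "sets M = sets (restrict_space borel K)" and "prob_space M"
    and "r > 0"
  shows "set_integrable M A (\<lambda>x. ln (measure M (ball x (2*r) \<inter> K)))
    \<and> (LINT x:A|M. ln (measure M (ball x (2*r) \<inter> K)))
        \<ge> - measure M (nbhd_in K A r) * ln (real (covering_number K A r)) - exp (-1)"
proof -
  interpret prob_space M by fact
  have Kb: "K \<in> sets borel" using assms(1) by (simp add: borel_closed compact_imp_closed)
  have spM: "space M = K" using sets_eq_imp_space_eq[OF assms(4)] by (simp add: space_restrict_space)
  have inM: "S \<in> sets M" if "S \<subseteq> K" "S \<in> sets borel" for S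
    using that assms(4) sets_restrict_space_iff[of K borel S] Kb by simp
  define g where "g x = ln (measure M (ball x (2*r) \<inter> K))" for x
  have gm: "g \<in> borel_measurable M" unfolding g_def
    by (rule borel_measurable_ln, rule meas_ball[OF Kb assms(4)]) unfold_locales
  define N where "N = covering_number K A r"
  obtain D where D: "D \<subseteq> K" "finite D" "K \<subseteq> (\<Union>c\<in>D. ball c r)"
  proof (rule compactE_image[OF assms(1), of K "\<lambda>c. ball c r"])
    show "K \<subseteq> (\<Union>c\<in>K. ball c r)" using assms(6) by force
  qed auto
  define P where "P n = (\<exists>C. C \<subseteq> K \<and> finite C \<and> card C = n \<and> A \<subseteq> (\<Union>c\<in>C. ball c r))" for n
  have "P (card D)" unfolding P_def using D assms(3) by blast
  then have "P (Least P)" by (rule LeastI)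
  moreover have "N = Least P" unfolding N_def covering_number_def P_def by simp
  ultimately have "\<exists>C. C \<subseteq> K \<and> finite C \<and> card C = N \<and> A \<subseteq> (\<Union>c\<in>C. ball c r)"
    unfolding P_def by simp
  then obtain C where C: "C \<subseteq> K" "finite C" "card C = N" "A \<subseteq> (\<Union>c\<in>C. ball c r)" by blast
  obtain c where c: "bij_betw c {0..<N} C" using ex_bij_betw_nat_finite[OF C(2)] C(3) by auto
  define Ai where "Ai i = {x\<in>A. x \<in> ball (c i) r \<and> (\<forall>j<i. x \<notin> ball (c j) r)}" for i
  have Ai_eq: "Ai i = A \<inter> ball (c i) r - (\<Union>j<i. ball (c j) r)" for i
    unfolding Ai_def by auto
  have Ai_sets: "Ai i \<in> sets M" for i
  proof (rule inM)
    show "Ai i \<subseteq> K" using assms(3) unfolding Ai_def by auto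
    have "open (\<Union>j<i. ball (c j) r)" by auto
    then show "Ai i \<in> sets borel" unfolding Ai_eq using assms(2) by auto
  qed
  have disj: "disjoint_family_on Ai {0..<N}"
    unfolding disjoint_family_on_def
  proof (intro ballI impI)
    fix i j :: nat assume "i \<noteq> j"
    then consider "i < j" | "j < i" by linarith
    then show "Ai i \<inter> Ai j = {}" unfolding Ai_def by cases auto
  qed
  have Aunion: "A = (\<Union>i\<in>{0..<N}. Ai i)"
  proof
    show "(\<Union>i\<in>{0..<N}. Ai i) \<subseteq> A" unfolding Ai_def by auto
    show "A \<subseteq> (\<Union>i\<in>{0..<N}. Ai i)"
    proof
      fix x assume x: "x \<in> A"
      then obtain c' where "c' \<in> C" "x \<in> ball c' r" using C(4) by auto
      then obtain i where i: "i < N" "x \<in> ball (c i) r" using c unfolding bij_betw_def by auto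
      define i0 where "i0 = (LEAST i. i < N \<and> x \<in> ball (c i) r)"
      have i0: "i0 < N \<and> x \<in> ball (c i0) r" unfolding i0_def by (rule LeastI[of _ i]) (use i in auto)
      have "\<forall>j<i0. x \<notin> ball (c j) r"
      proof (intro allI impI)
        fix j assume "j < i0"
        then have "\<not> (j < N \<and> x \<in> ball (c j) r)" unfolding i0_def by (rule not_less_Least)
        then show "x \<notin> ball (c j) r" using \<open>j < i0\<close> i0 by auto
      qed
      then have "x \<in> Ai i0" using x i0 unfolding Ai_def by auto
      then show "x \<in> (\<Union>i\<in>{0..<N}. Ai i)" using i0 by auto
    qed
  qed
  have ind: "indicator A x = (\<Sum>i\<in>{0..<N}. indicator (Ai i) x :: real)" for x
  proof -
    have "indicator (\<Union>i\<in>{0..<N}. Ai i) x = (\<Sum>i\<in>{0..<N}. indicator (Ai i) x :: real)"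
      by (rule indicator_UN_disjoint) (use disj in simp_all)
    then show ?thesis using Aunion by metis
  qed
  define p where "p i = measure M (Ai i)" for i
  have per: "integrable M (\<lambda>x. indicator (Ai i) x *\<^sub>R g x) \<and>
      integral\<^sup>L M (\<lambda>x. indicator (Ai i) x *\<^sub>R g x) \<ge> p i * ln (p i)" if iN: "i < N" for i
  proof (cases "p i = 0")
    case True
    then have "Ai i \<in> null_sets M" using Ai_sets emeasure_eq_measure unfolding p_def
      by (simp add: null_sets_def)
    then have ae: "AE x in M. 0 = indicator (Ai i) x *\<^sub>R g x" by (rule AE_mp[OF AE_not_in]) auto
    have m: "(\<lambda>x. indicator (Ai i) x *\<^sub>R g x) \<in> borel_measurable M"
      using gm Ai_sets by measurable
    have "integrable M (\<lambda>x. indicator (Ai i) x *\<^sub>R g x)"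
      by (rule integrable_cong_AE_imp[OF _ m ae]) simp
    moreover have "integral\<^sup>L M (\<lambda>x. indicator (Ai i) x *\<^sub>R g x) = integral\<^sup>L M (\<lambda>x. 0)"
      by (rule integral_cong_AE[OF m _ ae[THEN AE_mp]]) auto
    ultimately show ?thesis using True by simp
  next
    case False
    then have pp: "p i > 0" unfolding p_def by (simp add: order_le_neq_trans)
    have bnd: "ln (p i) \<le> g x \<and> g x \<le> 0" if x: "x \<in> Ai i" for x
    proof -
      have "Ai i \<subseteq> ball x (2*r) \<inter> K"
      proof
        fix y assume y: "y \<in> Ai i"
        then have "dist y (c i) < r" "dist x (c i) < r" using x unfolding Ai_def by (auto simp: dist_commute)
        then have "dist x y < 2*r" using dist_triangle[of x y "c i"] by (simp add: dist_commute)
        then show "y \<in> ball x (2*r) \<inter> K" using y assms(3) unfolding Ai_def by auto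
      qed
      then have "p i \<le> measure M (ball x (2*r) \<inter> K)" unfolding p_def
        by (intro finite_measure_mono inM) (use Kb in auto)
      moreover have "measure M (ball x (2*r) \<inter> K) \<le> 1" by (rule prob_le_1)
      ultimately show ?thesis using pp unfolding g_def by (simp add: ln_le_cancel_iff)
    qed
    have m: "(\<lambda>x. indicator (Ai i) x *\<^sub>R g x) \<in> borel_measurable M"
      using gm Ai_sets by measurable
    have int: "integrable M (\<lambda>x. indicator (Ai i) x *\<^sub>R g x)"
    proof (rule integrable_const_bound[OF AE_I2 m])
      fix x show "norm (indicator (Ai i) x *\<^sub>R g x) \<le> \<bar>ln (p i)\<bar>"
        using bnd[of x] by (cases "x \<in> Ai i") auto
    qed
    have si: "set_integrable M (Ai i) g" using int by (simp add: set_integrable_def)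
    have sc: "set_integrable M (Ai i) (\<lambda>_. ln (p i))" unfolding set_integrable_def
      using Ai_sets by (intro integrable_indicator) (auto simp: emeasure_eq_measure)
    have "(LINT x:Ai i|M. ln (p i)) \<le> (LINT x:Ai i|M. g x)"
      by (rule set_integral_mono[OF sc si]) (use bnd in auto)
    moreover have "(LINT x:Ai i|M. ln (p i)) = p i * ln (p i)"
      using set_integral_const[OF Ai_sets, where c="ln (p i)"] unfolding p_def by (simp add: emeasure_eq_measure)
    moreover have "Ai i \<inter> space M = Ai i" using sets.sets_into_space[OF Ai_sets] by blast
    ultimately have "p i * ln (p i) \<le> integral\<^sup>L M (\<lambda>x. indicator (Ai i) x *\<^sub>R g x)"
      by (simp only: set_lebesgue_integral_def)
    then show ?thesis using int by simp
  qed
  have eq: "(\<lambda>x. indicator A x *\<^sub>R g x) = (\<lambda>x. \<Sum>i\<in>{0..<N}. indicator (Ai i) x *\<^sub>R g x)"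
    by (rule ext) (simp add: ind sum_distrib_right)
  have SI: "set_integrable M A g" unfolding set_integrable_def eq
    using per by (intro Bochner_Integration.integrable_sum) auto
  have "(LINT x:A|M. g x) = (\<Sum>i\<in>{0..<N}. integral\<^sup>L M (\<lambda>x. indicator (Ai i) x *\<^sub>R g x))"
    unfolding set_lebesgue_integral_def eq using per by (intro Bochner_Integration.integral_sum) auto
  also have "\<dots> \<ge> (\<Sum>i\<in>{0..<N}. p i * ln (p i))"
    using per by (intro sum_mono) auto
  finally have I1: "(LINT x:A|M. g x) \<ge> (\<Sum>i\<in>{0..<N}. p i * ln (p i))" .
  have I2: "(\<Sum>i\<in>{0..<N}. p i * ln (p i)) \<ge> - (\<Sum>i\<in>{0..<N}. p i) * ln (real N) - exp (-1)"
    using entropy_bound[of "{0..<N}" p] unfolding p_def by simp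
  have sumA: "(\<Sum>i\<in>{0..<N}. p i) = measure M A"
  proof -
    have "measure M (\<Union>i\<in>{0..<N}. Ai i) = (\<Sum>i\<in>{0..<N}. measure M (Ai i))"
      by (rule measure_finite_Union) (use Ai_sets disj in \<open>auto simp: emeasure_eq_measure\<close>)
    then show ?thesis unfolding p_def using Aunion by simp
  qed
  have nb: "nbhd_in K A r \<in> sets M"
  proof (rule inM)
    show "nbhd_in K A r \<subseteq> K" unfolding nbhd_in_def by auto
    have "nbhd_in K A r = K \<inter> (\<Union>a\<in>A. ball a r)" unfolding nbhd_in_def by (auto simp: dist_commute)
    moreover have "open (\<Union>a\<in>A. ball a r)" by auto
    ultimately show "nbhd_in K A r \<in> sets borel" using Kb by auto
  qed
  have "A \<subseteq> nbhd_in K A r" using assms(3,6) unfolding nbhd_in_def by force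
  then have "measure M A \<le> measure M (nbhd_in K A r)"
    by (intro finite_measure_mono nb)
  moreover have "ln (real N) \<ge> 0" by (cases "N = 0") auto
  ultimately have "- measure M (nbhd_in K A r) * ln (real N) \<le> - measure M A * ln (real N)"
    by (simp add: mult_right_mono)
  then have "(LINT x:A|M. g x) \<ge> - measure M (nbhd_in K A r) * ln (real N) - exp (-1)"
  proof -
    have "- (\<Sum>i\<in>{0..<N}. p i) * ln (real N) = - measure M A * ln (real N)" using sumA by simp
    then show ?thesis using I1 I2 \<open>- measure M (nbhd_in K A r) * ln (real N) \<le> - measure M A * ln (real N)\<close> by linarith
  qed
  then show ?thesis using SI unfolding g_def N_def by simp
qed

end
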